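(* There are infinitely many odd positive integers $N$ for which there are no palindromic numbers $A,B$ with $N=A/B$.
   Context: A positive integer $n$ is palindromic if its binary representation (most significant digit first, no leading zeros) reads the same forwards and backwards. *)

theory Defs
  imports Main
begin

fun bin_digits :: "nat \<Rightarrow> nat list" where
  "bin_digits n = (if n = 0 then [] else n mod 2 # bin_digits (n div 2))"

declare bin_digits.simps[simp del]

definition palindromic :: "nat \<Rightarrow> bool" where
  "palindromic n \<longleftrightarrow> n > 0 \<and> rev (bin_digits n) = bin_digits n"

end

theory Submission
  imports Defs
begin
lemma bd_len: "n > 0 \<Longrightarrow> 2 ^ (length (bin_digits n) - 1) \<le> n \<and> n < 2 ^ length (bin_digits n)"
proof (induction n rule: bin_digits.induct)
  case (1 n)
  show ?case
  proof (cases "n div 2 = 0")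
    case True
    then have "n = 1" using "1.prems" by auto
    then show ?thesis by (simp add: bin_digits.simps)
  next
    case False
    then have IH: "2 ^ (length (bin_digits (n div 2)) - 1) \<le> n div 2 \<and> n div 2 < 2 ^ length (bin_digits (n div 2))"
      using "1.IH" "1.prems" by auto
    have e: "bin_digits n = n mod 2 # bin_digits (n div 2)" using "1.prems" by (simp add: bin_digits.simps)
    have "length (bin_digits (n div 2)) \<ge> 1" using False by (cases "bin_digits (n div 2)") (auto simp: bin_digits.simps split: if_splits)
    then obtain L where L: "length (bin_digits (n div 2)) = Suc L" by (cases "length (bin_digits (n div 2))") auto
    show ?thesis using IH unfolding e using L by auto
  qed
qed

lemma bd_nth: "i < length (bin_digits n) \<Longrightarrow> bin_digits n ! i = n div 2 ^ i mod 2"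
proof (induction n arbitrary: i rule: bin_digits.induct)
  case (1 n)
  have n0: "n \<noteq> 0" using "1.prems" by (subst (asm) bin_digits.simps) (auto split: if_splits)
  have e: "bin_digits n = n mod 2 # bin_digits (n div 2)" using n0 by (simp add: bin_digits.simps)
  show ?case
  proof (cases i)
    case 0 then show ?thesis using e by simp
  next
    case (Suc j)
    then have "j < length (bin_digits (n div 2))" using "1.prems" e by simp
    then have "bin_digits (n div 2) ! j = n div 2 div 2 ^ j mod 2" using "1.IH" n0 by blast
    then show ?thesis using e Suc by (simp add: div_mult2_eq)
  qed
qed

lemma pal_key:
  assumes "palindromic A"
  shows "\<exists>a. a \<ge> 1 \<and> 2^(a-1) \<le> A \<and> A < 2^a \<and> (\<forall>i<a. A div 2^i mod 2 = A div 2^(a-1-i) mod 2)"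
proof -
  let ?d = "bin_digits A"
  have p: "A > 0" "rev ?d = ?d" using assms by (auto simp: palindromic_def)
  have b: "2 ^ (length ?d - 1) \<le> A \<and> A < 2 ^ length ?d" using bd_len p by blast
  have "length ?d \<ge> 1" using b p by (cases "length ?d") auto
  moreover have "\<forall>i<length ?d. A div 2^i mod 2 = A div 2^(length ?d-1-i) mod 2"
  proof (intro allI impI)
    fix i assume i: "i < length ?d"
    have "?d ! i = rev ?d ! i" using p by simp
    also have "\<dots> = ?d ! (length ?d - Suc i)" using i by (simp add: rev_nth)
    moreover have "?d ! i = A div 2^i mod 2" using i bd_nth by blast
    moreover have "length ?d - Suc i < length ?d" using i by simp
    then have "?d ! (length ?d - Suc i) = A div 2^(length ?d - Suc i) mod 2" using bd_nth by blast
    ultimately show "A div 2^i mod 2 = A div 2^(length ?d-1-i) mod 2" by simp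
  qed
  ultimately show ?thesis using b by blast
qed

lemma mod8: "(n::nat) mod 8 = n mod 2 + 2 * (n div 2 mod 2) + 4 * (n div 4 mod 2)"
proof -
  have "n mod 8 = n mod 2 + 2 * (n div 2 mod 4)" using mod_mult2_eq[of n 2 4] by simp
  moreover have "n div 2 mod 4 = n div 2 mod 2 + 2 * (n div 2 div 2 mod 2)" using mod_mult2_eq[of "n div 2" 2 2] by simp
  moreover have "n div 2 div 2 = n div 4" using div_mult2_eq[of n 2 2] by simp
  ultimately show ?thesis by simp
qed
lemma exp_eq:
  fixes A :: nat
  assumes "a \<ge> 1" "2^(a-1) \<le> A" "A < 2^a" "c \<ge> 1" "2^(c-1) \<le> A" "A < 2^c"
  shows "a = c"
proof (rule ccontr)
  assume "a \<noteq> c"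
  then consider "a \<le> c - 1" | "c \<le> a - 1" by linarith
  then show False
  proof cases
    case 1
    then have "(2::nat)^a \<le> 2^(c-1)" by (rule power_increasing) simp
    then show False using assms by linarith
  next
    case 2
    then have "(2::nat)^c \<le> 2^(a-1)" by (rule power_increasing) simp
    then show False using assms by linarith
  qed
qed
lemma top3:
  fixes A a :: nat
  assumes a: "a \<ge> 3" "2^(a-1) \<le> A" "A < 2^a"
    and bits: "\<forall>i<a. A div 2^i mod 2 = A div 2^(a-1-i) mod 2"
  shows "4 \<le> A div 2^(a-3) \<and> A div 2^(a-3) < 8 \<and>
    A mod 8 = (if A div 2^(a-3) = 4 then 1 else if A div 2^(a-3) = 5 then 5
               else if A div 2^(a-3) = 6 then 3 else 7)"
proof -
  obtain k where k: "a = k + 3" using a(1) by (metis le_add_diff_inverse2)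
  define P where "P = (2::nat)^k"
  have P0: "P > 0" unfolding P_def by simp
  have e1: "(2::nat)^(a-1) = 4 * P" and e2: "(2::nat)^a = 8 * P" unfolding P_def k
    by (simp_all add: power_add)
  define t where "t = A div P"
  have t1: "4 \<le> t" unfolding t_def using a(2) e1 P0
    by (metis div_le_mono nonzero_mult_div_cancel_right less_not_refl2)
  have t2: "t < 8" unfolding t_def using a(3) e2 P0 by (simp add: div_less_iff_less_mult mult.commute)
  have d4: "t div 4 = 1" using t1 t2 by simp
  have q1: "t div 4 = A div 2^(k+2)" unfolding t_def P_def
    by (simp add: power_add) (metis div_mult2_eq mult.commute)
  have q2: "t div 2 = A div 2^(k+1)" unfolding t_def P_def
    by (simp add: power_add) (metis div_mult2_eq mult.commute)
  have b0: "A mod 2 = 1" using bits[rule_format, of 0] k q1 d4 by simp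
  have b1: "A div 2 mod 2 = t div 2 mod 2" using bits[rule_format, of 1] k q2 by simp
  have b2: "A div 4 mod 2 = t mod 2" using bits[rule_format, of 2] k unfolding t_def P_def by simp
  have m: "A mod 8 = 1 + 2 * (t div 2 mod 2) + 4 * (t mod 2)" using mod8[of A] b0 b1 b2 by simp
  have "t = 4 \<or> t = 5 \<or> t = 6 \<or> t = 7" using t1 t2 by auto
  then have "A mod 8 = (if t = 4 then 1 else if t = 5 then 5 else if t = 6 then 3 else 7)"
    using m by auto
  then show ?thesis using t1 t2 unfolding t_def P_def k by simp
qed

lemma main_case:
  fixes A B n :: nat
  assumes pA: "palindromic A" and pB: "palindromic B" and eq: "A = (2^(n+5) + 3) * B"
  shows False
proof -
  define R where "R = (2::nat)^n"
  have R1: "R \<ge> 1" unfolding R_def by simp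
  have Q: "(2::nat)^(n+5) = 32 * R" unfolding R_def by (simp add: power_add)
  have eqA: "A = 32 * R * B + 3 * B" using eq Q by (simp add: algebra_simps)
  have Am8: "A mod 8 = (3 * B) mod 8"
  proof -
    have "A = 3 * B + (4 * R * B) * 8" using eqA by simp
    then show ?thesis by (simp only: mod_mult_self1)
  qed
  obtain a where a: "a \<ge> 1" "2^(a-1) \<le> A" "A < 2^a" "\<forall>i<a. A div 2^i mod 2 = A div 2^(a-1-i) mod 2"
    using pal_key[OF pA] by blast
  obtain b where b: "b \<ge> 1" "2^(b-1) \<le> B" "B < 2^b" "\<forall>i<b. B div 2^i mod 2 = B div 2^(b-1-i) mod 2"
    using pal_key[OF pB] by blast
  show False
  proof (cases "b \<ge> 3")
    case True
    obtain j where j: "b = j + 3" using True by (metis le_add_diff_inverse2)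
    define P where "P = (2::nat)^j"
    have P1: "P \<ge> 1" unfolding P_def by simp
    have eb1: "(2::nat)^(b-1) = 4 * P" and eb: "(2::nat)^b = 8 * P" unfolding P_def j
      by (simp_all add: power_add)
    have tB: "4 \<le> B div P \<and> B div P < 8 \<and> B mod 8 = (if B div P = 4 then 1 else if B div P = 5 then 5
               else if B div P = 6 then 3 else 7)"
      using top3[OF True b(2,3,4)] unfolding P_def j by simp
    define tb where "tb = B div P"
    define r where "r = B mod P"
    have Bdec: "B = tb * P + r" unfolding tb_def r_def by simp
    have rP: "r < P" unfolding r_def using P1 by simp
    have Blo: "4 * P \<le> B" and Bhi: "B < 8 * P" using b eb1 eb by auto
    show False
    proof (cases "A < 8 * (32 * R * P)")
      case True
      have "a = n + 5 + b"
      proof (rule exp_eq[OF a(1,2,3)])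
        have e: "(2::nat)^(n+5+b-1) = 32 * R * (4 * P)" unfolding R_def P_def j by (simp add: power_add)
        moreover have h: "32 * R * (4 * P) \<le> 32 * R * B" by (rule mult_le_mono2[OF Blo])
        ultimately show "2^(n+5+b-1) \<le> A" using eqA by linarith
        have "(2::nat)^(n+5+b) = 8 * (32 * R * P)" unfolding R_def P_def j by (simp add: power_add)
        then show "A < 2^(n+5+b)" using True by simp
      qed simp
      then have a3: "a \<ge> 3" by simp
      have ea: "(2::nat)^(a-3) = 32 * R * P" unfolding \<open>a = n + 5 + b\<close> R_def P_def j by (simp add: power_add)
      have tA: "4 \<le> A div (32*R*P) \<and> A div (32*R*P) < 8 \<and> A mod 8 = (if A div (32*R*P) = 4 then 1 else if A div (32*R*P) = 5 then 5
               else if A div (32*R*P) = 6 then 3 else 7)"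
        using top3[OF a3 a(2,3,4)] unfolding ea by simp
      have Adec: "A = tb * (32 * R * P) + (32 * R * r + 3 * B)" using eqA Bdec by (simp add: algebra_simps)
      define D where "D = 32 * R * P"
      have D0: "D > 0" unfolding D_def using R1 P1 by simp
      have E: "32 * R * r + 3 * B < 2 * D"
      proof -
        have "32 * R * r < 32 * R * P" using rP R1 by simp
        moreover have "32 * 1 * P \<le> 32 * R * P" using R1 by (intro mult_le_mono) simp_all
        ultimately show ?thesis unfolding D_def using Bhi by linarith
      qed
      have "A div D = tb + (32 * R * r + 3 * B) div D" using Adec D0 unfolding D_def[symmetric]
        by (simp add: add.commute)
      moreover have "(32 * R * r + 3 * B) div D < 2" using E D0 by (simp add: div_less_iff_less_mult)
      ultimately have "A div D = tb \<or> A div D = tb + 1" by linarith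
      moreover have "A mod 8 = 3 * (B mod 8) mod 8" using Am8 by (simp add: mod_mult_right_eq)
      ultimately show False using tA tB unfolding tb_def[symmetric] D_def[symmetric]
        by (elim disjE; simp split: if_splits)
    next
      case False
      define D where "D = 32 * R * P"
      have D0: "D > 0" unfolding D_def using R1 P1 by simp
      have big: "8 * D \<le> A" using False unfolding D_def by simp
      have "32 * 1 * P \<le> 32 * R * P" using R1 by (intro mult_le_mono) simp_all
      then have s3: "3 * B < D" unfolding D_def using Bhi by linarith
      have "32 * R * B \<le> 32 * R * (8 * P)" using Bhi by (intro mult_le_mono2) simp
      moreover have "32 * R * (8 * P) = 8 * D" unfolding D_def by simp
      ultimately have Aup: "A < 9 * D" using eqA s3 by linarith
      have "a = n + 5 + b + 1"
      proof (rule exp_eq[OF a(1,2,3)])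
        have "(2::nat)^(n+5+b+1-1) = 8 * D" unfolding R_def P_def j D_def by (simp add: power_add)
        then show "2^(n+5+b+1-1) \<le> A" using big by simp
        have "(2::nat)^(n+5+b+1) = 16 * D" unfolding R_def P_def j D_def by (simp add: power_add)
        then show "A < 2^(n+5+b+1)" using Aup by simp
      qed simp
      then have a3: "a \<ge> 3" by simp
      have ea: "(2::nat)^(a-3) = 2 * D" unfolding \<open>a = n + 5 + b + 1\<close> R_def P_def j D_def by (simp add: power_add)
      have tA: "4 \<le> A div (2*D) \<and> A div (2*D) < 8 \<and> A mod 8 = (if A div (2*D) = 4 then 1 else if A div (2*D) = 5 then 5
               else if A div (2*D) = 6 then 3 else 7)"
        using top3[OF a3 a(2,3,4)] unfolding ea by simp
      have "A div (2*D) < 5" using Aup D0 by (simp add: div_less_iff_less_mult)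
      then have A1: "A mod 8 = 1" using tA by simp
      have t7: "tb = 7"
      proof (rule ccontr)
        assume "tb \<noteq> 7"
        then have "tb \<le> 6" using tB unfolding tb_def[symmetric] by simp
        then have "tb * P \<le> 6 * P" by simp
        then have "B \<le> 7 * P" using Bdec rP by linarith
        then have "32 * R * B \<le> 32 * R * (7 * P)" by (intro mult_le_mono2)
        moreover have "32 * R * (7 * P) = 7 * D" unfolding D_def by simp
        ultimately have "A < 8 * D" using eqA s3 by linarith
        then show False using big by simp
      qed
      then have "B mod 8 = 7" using tB unfolding tb_def[symmetric] by simp
      then have "A mod 8 = 5" using Am8 mod_mult_right_eq[of 3 B 8] by simp
      then show False using A1 by simp
    qed
  next
    case False
    have "B = 1 \<or> B = 3"
    proof -
      have "b = 1 \<or> b = 2" using False b(1) by linarith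
      then show ?thesis
      proof
        assume "b = 1" then show ?thesis using b(2,3) by simp
      next
        assume b2: "b = 2"
        then have "2 \<le> B" "B < 4" using b(2,3) by simp_all
        moreover have "B mod 2 = B div 2 mod 2" using b(4) b2 by (metis One_nat_def diff_Suc_1 diff_zero numeral_2_eq_2 power_one_right power_0 zero_less_numeral div_by_1)
        ultimately show ?thesis by presburger
      qed
    qed
    then show False
    proof
      assume B1: "B = 1"
      then have AA: "A = 32 * R + 3" using eqA by simp
      have "a = n + 6"
      proof (rule exp_eq[OF a(1,2,3)])
        have "(2::nat)^(n+6-1) = 32 * R" "(2::nat)^(n+6) = 64 * R" unfolding R_def by (simp_all add: power_add)
        then show "2^(n+6-1) \<le> A" "A < 2^(n+6)" using AA R1 by simp_all
      qed simp
      then have a3: "a \<ge> 3" by simp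
      have ea: "(2::nat)^(a-3) = 8 * R" unfolding \<open>a = n + 6\<close> R_def by (simp add: power_add)
      have tA: "4 \<le> A div (8*R) \<and> A div (8*R) < 8 \<and> A mod 8 = (if A div (8*R) = 4 then 1 else if A div (8*R) = 5 then 5
               else if A div (8*R) = 6 then 3 else 7)"
        using top3[OF a3 a(2,3,4)] unfolding ea by simp
      have "A div (8*R) < 5" using AA R1 by (simp add: div_less_iff_less_mult)
      moreover have "A mod 8 = 3" using Am8 B1 by simp
      ultimately show False using tA by simp
    next
      assume B3: "B = 3"
      then have AA: "A = 96 * R + 9" using eqA by simp
      have "a = n + 7"
      proof (rule exp_eq[OF a(1,2,3)])
        have "(2::nat)^(n+7-1) = 64 * R" "(2::nat)^(n+7) = 128 * R" unfolding R_def by (simp_all add: power_add)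
        then show "2^(n+7-1) \<le> A" "A < 2^(n+7)" using AA R1 by simp_all
      qed simp
      then have a3: "a \<ge> 3" by simp
      have ea: "(2::nat)^(a-3) = 16 * R" unfolding \<open>a = n + 7\<close> R_def by (simp add: power_add)
      have tA: "4 \<le> A div (16*R) \<and> A div (16*R) < 8 \<and> A mod 8 = (if A div (16*R) = 4 then 1 else if A div (16*R) = 5 then 5
               else if A div (16*R) = 6 then 3 else 7)"
        using top3[OF a3 a(2,3,4)] unfolding ea by simp
      have "6 * (16 * R) \<le> A" using AA by simp
      then have "6 \<le> A div (16*R)" using R1 by (metis div_le_mono nonzero_mult_div_cancel_right mult_eq_0_iff not_one_le_zero zero_neq_numeral)
      moreover have "A div (16*R) < 7" using AA R1 by (simp add: div_less_iff_less_mult)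
      moreover have "A mod 8 = 1" using Am8 B3 by simp
      ultimately show False using tA by simp
    qed
  qed
qed

theorem theorem8:
  shows "infinite {N :: nat. N > 0 \<and> odd N \<and>
           \<not> (\<exists>A B. palindromic A \<and> palindromic B \<and> A = N * B)}"
proof
  let ?f = "\<lambda>n::nat. (2::nat)^(n+5) + 3"
  assume fin: "finite {N :: nat. N > 0 \<and> odd N \<and>
           \<not> (\<exists>A B. palindromic A \<and> palindromic B \<and> A = N * B)}"
  have sub: "range ?f \<subseteq> {N :: nat. N > 0 \<and> odd N \<and>
           \<not> (\<exists>A B. palindromic A \<and> palindromic B \<and> A = N * B)}"
    using main_case by auto
  have inj: "inj ?f" by (rule injI) simp
  have "finite (range ?f)" using finite_subset[OF sub fin] .
  then have "finite (UNIV :: nat set)" using finite_imageD inj by blast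
  then show False by simp
qed

end
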